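(* Let $p\in[1,2]$ and $p^*=\frac{p}{p-1}$ ($p^*=\infty$ if $p=1$). Then for all $n\in\mathbb{N}$ and all real $a_1,\dots,a_n$, \[ \left(\sum_{j=1}^n|a_j|^2\right)^{1/2}\le D_{p^*,\infty}\left(\int_0^1\left|\sum_{j=1}^n a_jr_j(t)\right|^p dt\right)^{1/p}; \] consequently $\mathrm{A}_p\le D_{p^*,\infty}$.
   Context: Scalars are real. $X_q=\ell_q$ for $1\le q<\infty$, $X_\infty=c_0$, $(e_k)$ canonical unit vectors, $\|T\|$ the sup of $|T(x,y)|$ over unit balls. Rademacher functions: $r_j(t)=\operatorname{sign}(\sin(2^j\pi t))$ on $[0,1]$. For $0<r<\infty$, $\mathrm{A}_r$ is the optimal constant in the Khintchine inequality $\left(\sum_{j=1}^n|a_j|^2\right)^{1/2}\le \mathrm{A}_r\left(\int_0^1|\sum_{j=1}^n a_jr_j(t)|^rdt\right)^{1/r}$ (for all $n$ and real $a_j$). For $q\in[2,\infty]$, $D_{q,\infty}$ denotes the optimal constant $D$ such that $\left(\sum_{j}\left(\sum_{i}|T(e_i,e_j)|^{\frac{q}{q-1}}\right)^{2\frac{q-1}{q}}\right)^{1/2}\le D\|T\|$ for all continuous bilinear $T:X_q\times X_\infty\to\mathbb{R}$ (exponent $q/(q-1)$ read as $1$ when $q=\infty$). *)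

theory Defs
  imports "HOL-Analysis.Analysis"
begin

definition Xsp :: "ereal \<Rightarrow> (nat \<Rightarrow> real) set" where
  "Xsp q = (if q = \<infinity> then {x. x \<longlonglongrightarrow> 0}
            else {x. summable (\<lambda>i. \<bar>x i\<bar> powr real_of_ereal q)})"

definition Xnorm :: "ereal \<Rightarrow> (nat \<Rightarrow> real) \<Rightarrow> real" where
  "Xnorm q x = (if q = \<infinity> then (SUP i. \<bar>x i\<bar>)
               else (\<Sum>i. \<bar>x i\<bar> powr real_of_ereal q) powr (1 / real_of_ereal q))"

definition ecan :: "nat \<Rightarrow> nat \<Rightarrow> real" where
  "ecan k = (\<lambda>i. if i = k then 1 else 0)"

definition bilinear_on :: "(nat \<Rightarrow> real) set \<Rightarrow> (nat \<Rightarrow> real) set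
    \<Rightarrow> ((nat \<Rightarrow> real) \<Rightarrow> (nat \<Rightarrow> real) \<Rightarrow> real) \<Rightarrow> bool" where
  "bilinear_on X Y T \<longleftrightarrow>
     (\<forall>x\<in>X. \<forall>x'\<in>X. \<forall>y\<in>Y. \<forall>c::real.
        T (\<lambda>i. x i + x' i) y = T x y + T x' y \<and> T (\<lambda>i. c * x i) y = c * T x y) \<and>
     (\<forall>x\<in>X. \<forall>y\<in>Y. \<forall>y'\<in>Y. \<forall>c::real.
        T x (\<lambda>i. y i + y' i) = T x y + T x y' \<and> T x (\<lambda>i. c * y i) = c * T x y)"

text \<open>Continuous bilinear form T : X_q \<times> X_\<infinity> \<rightarrow> R (continuity of a bilinear map = boundedness).\<close>
definition cont_bilinear :: "ereal \<Rightarrow> ((nat \<Rightarrow> real) \<Rightarrow> (nat \<Rightarrow> real) \<Rightarrow> real) \<Rightarrow> bool" where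
  "cont_bilinear q T \<longleftrightarrow> bilinear_on (Xsp q) (Xsp \<infinity>) T \<and>
     (\<exists>C. \<forall>x\<in>Xsp q. \<forall>y\<in>Xsp \<infinity>. \<bar>T x y\<bar> \<le> C * Xnorm q x * Xnorm \<infinity> y)"

definition bnorm :: "ereal \<Rightarrow> ((nat \<Rightarrow> real) \<Rightarrow> (nat \<Rightarrow> real) \<Rightarrow> real) \<Rightarrow> real" where
  "bnorm q T = (SUP xy \<in> {(x, y). x \<in> Xsp q \<and> y \<in> Xsp \<infinity> \<and> Xnorm q x \<le> 1 \<and> Xnorm \<infinity> y \<le> 1}.
                  \<bar>T (fst xy) (snd xy)\<bar>)"

definition conj_exp :: "ereal \<Rightarrow> real" where
  "conj_exp q = (if q = \<infinity> then 1 else real_of_ereal q / (real_of_ereal q - 1))"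

text \<open>Truncation (indices i, j < N) of the mixed sum
  (\<Sum>_j (\<Sum>_i |T(e_i,e_j)|^{q'})^{2/q'})^{1/2}; the full (possibly infinite) mixed sum is the
  supremum over N of these truncations, so "\<le> D\<parallel>T\<parallel>" for the full sum is equivalent to it for all N.\<close>
definition mixed_sum_trunc :: "ereal \<Rightarrow> ((nat \<Rightarrow> real) \<Rightarrow> (nat \<Rightarrow> real) \<Rightarrow> real) \<Rightarrow> nat \<Rightarrow> real" where
  "mixed_sum_trunc q T N =
     (\<Sum>j<N. (\<Sum>i<N. \<bar>T (ecan i) (ecan j)\<bar> powr conj_exp q) powr (2 / conj_exp q)) powr (1/2)"

definition D_const :: "ereal \<Rightarrow> real" where
  "D_const q = Inf {D. \<forall>T. cont_bilinear q T \<longrightarrow> (\<forall>N. mixed_sum_trunc q T N \<le> D * bnorm q T)}"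

definition rademacher :: "nat \<Rightarrow> real \<Rightarrow> real" where
  "rademacher j t = sgn (sin (2 ^ j * pi * t))"

definition khintchine_A :: "real \<Rightarrow> real" where
  "khintchine_A r = Inf {A. \<forall>(n::nat) (a::nat \<Rightarrow> real).
      (\<Sum>j=1..n. \<bar>a j\<bar>^2) powr (1/2)
        \<le> A * (integral {0..1} (\<lambda>t. \<bar>\<Sum>j=1..n. a j * rademacher j t\<bar> powr r)) powr (1/r)}"

definition pstar :: "real \<Rightarrow> ereal" where
  "pstar p = (if p = 1 then \<infinity> else ereal (p / (p - 1)))"

end

theory Submission
  imports Defs
begin


definition sv :: "nat \<Rightarrow> nat \<Rightarrow> real" where
  "sv k j = (if odd (k div 2^j) then -1 else 1)"

definition scons :: "real \<Rightarrow> (nat \<Rightarrow> real) \<Rightarrow> nat \<Rightarrow> real" where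
  "scons s e j = (if j = 0 then s else e (j - 1))"

definition Eav :: "nat \<Rightarrow> ((nat \<Rightarrow> real) \<Rightarrow> real) \<Rightarrow> real" where
  "Eav n G = (\<Sum>k<2^n. G (sv k)) / 2^n"

lemma sv_even: "sv (2*k) = scons 1 (sv k)"
proof
  fix j show "sv (2*k) j = scons 1 (sv k) j"
  proof (cases j)
    case 0 then show ?thesis by (simp add: sv_def scons_def)
  next
    case (Suc i)
    have "2*k div 2^(Suc i) = k div 2^i" by simp
    then show ?thesis using Suc by (simp add: sv_def scons_def)
  qed
qed

lemma sv_odd: "sv (2*k+1) = scons (-1) (sv k)"
proof
  fix j show "sv (2*k+1) j = scons (-1) (sv k) j"
  proof (cases j)
    case 0 then show ?thesis by (simp add: sv_def scons_def)
  next
    case (Suc i)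
    have "(2*k+1) div 2^(Suc i) = ((2*k+1) div 2) div 2^i"
      by (simp add: div_mult2_eq power_Suc)
    also have "(2*k+1) div 2 = k" by simp
    finally have "(2*k+1) div 2^(Suc i) = k div 2^i" .
    then show ?thesis using Suc by (simp add: sv_def scons_def)
  qed
qed

lemma sv_abs [simp]: "\<bar>sv k j\<bar> = 1"
  by (simp add: sv_def)

lemma sv_sq [simp]: "(sv k j)^2 = 1"
  by (simp add: sv_def)

lemma sv_0: "sv 0 = (\<lambda>j. 1)"
  by (auto simp: sv_def)

lemma sum_even_odd: "(\<Sum>k<2*M. (f k::real)) = (\<Sum>k<M. f (2*k) + f (2*k+1))" for M :: nat
  by (induction M) (auto simp: sum.lessThan_Suc)

lemma Eav_0: "Eav 0 G = G (\<lambda>j. 1)"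
  by (simp add: Eav_def sv_0)

lemma Eav_Suc: "Eav (Suc n) G = (Eav n (\<lambda>e. G (scons 1 e)) + Eav n (\<lambda>e. G (scons (-1) e))) / 2"
proof -
  have "(\<Sum>k<2^Suc n. G (sv k)) = (\<Sum>k<2^n. G (sv (2*k)) + G (sv (2*k+1)))"
    using sum_even_odd[where M="2^n" and f="\<lambda>k. G (sv k)"] by simp
  also have "\<dots> = (\<Sum>k<2^n. G (scons 1 (sv k))) + (\<Sum>k<2^n. G (scons (-1) (sv k)))"
    by (simp add: sv_even sv_odd[simplified] sum.distrib)
  finally show ?thesis by (simp add: Eav_def field_simps)
qed

lemma Eav_add: "Eav n (\<lambda>e. f e + g e) = Eav n f + Eav n g"
  by (simp add: Eav_def sum.distrib add_divide_distrib)

lemma Eav_cmult: "Eav n (\<lambda>e. c * f e) = c * Eav n f"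
  by (simp add: Eav_def sum_distrib_left)

lemma Eav_const: "Eav n (\<lambda>e. c) = c"
  by (simp add: Eav_def)

lemma Eav_mono: "(\<And>k. f (sv k) \<le> g (sv k)) \<Longrightarrow> Eav n f \<le> Eav n g"
  unfolding Eav_def by (intro divide_right_mono sum_mono) auto

lemma Eav_sum: "finite I \<Longrightarrow> Eav n (\<lambda>e. \<Sum>i\<in>I. f i e) = (\<Sum>i\<in>I. Eav n (f i))"
  by (induction I rule: finite_induct) (auto simp: Eav_add Eav_const)

lemma sum_scons: "(\<Sum>j<Suc n. b j * scons s e j) = b 0 * s + (\<Sum>j<n. b (Suc j) * e j)"
  by (subst sum.lessThan_Suc_shift) (simp add: scons_def)

lemma Eav_mom2: "Eav n (\<lambda>e. (c + (\<Sum>j<n. b j * e j))^2) = c^2 + (\<Sum>j<n. (b j)^2)"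
proof (induction n arbitrary: b c)
  case 0 then show ?case by (simp add: Eav_0)
next
  case (Suc n)
  have "Eav (Suc n) (\<lambda>e. (c + (\<Sum>j<Suc n. b j * e j))^2)
     = (Eav n (\<lambda>e. ((c + b 0) + (\<Sum>j<n. b (Suc j) * e j))^2)
        + Eav n (\<lambda>e. ((c - b 0) + (\<Sum>j<n. b (Suc j) * e j))^2)) / 2"
    unfolding Eav_Suc sum_scons by (simp add: algebra_simps)
  also have "\<dots> = c^2 + (\<Sum>j<Suc n. (b j)^2)"
    by (simp only: Suc.IH) (simp add: sum.lessThan_Suc_shift power2_eq_square algebra_simps del: sum.lessThan_Suc)
  finally show ?case .
qed

lemma Eav_mom4: "Eav n (\<lambda>e. (c + (\<Sum>j<n. b j * e j))^4)
   \<le> c^4 + 6 * c^2 * (\<Sum>j<n. (b j)^2) + 3 * (\<Sum>j<n. (b j)^2)^2"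
proof (induction n arbitrary: b c)
  case 0 then show ?case by (simp add: Eav_0)
next
  case (Suc n)
  define s where "s = (\<Sum>j<n. (b (Suc j))^2)"
  have s0: "s \<ge> 0" unfolding s_def by (simp add: sum_nonneg)
  have "Eav (Suc n) (\<lambda>e. (c + (\<Sum>j<Suc n. b j * e j))^4)
     = (Eav n (\<lambda>e. ((c + b 0) + (\<Sum>j<n. b (Suc j) * e j))^4)
        + Eav n (\<lambda>e. ((c - b 0) + (\<Sum>j<n. b (Suc j) * e j))^4)) / 2"
    unfolding Eav_Suc sum_scons by (simp add: algebra_simps)
  also have "\<dots> \<le> ((c+b 0)^4 + 6 * (c+b 0)^2 * s + 3 * s^2 + ((c-b 0)^4 + 6 * (c-b 0)^2 * s + 3 * s^2)) / 2"
    using Suc.IH[where b="\<lambda>j. b (Suc j)" and c="c + b 0"] Suc.IH[where b="\<lambda>j. b (Suc j)" and c="c - b 0"]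
    unfolding s_def by (intro divide_right_mono add_mono) auto
  also have "\<dots> \<le> c^4 + 6 * c^2 * ((b 0)^2 + s) + 3 * ((b 0)^2 + s)^2"
  proof -
    have "0 \<le> 2 * (b 0)^4" by simp
    then show ?thesis by (simp add: power2_eq_square power4_eq_xxxx algebra_simps)
  qed
  also have "(b 0)^2 + s = (\<Sum>j<Suc n. (b j)^2)"
    unfolding s_def by (simp add: sum.lessThan_Suc_shift del: sum.lessThan_Suc)
  finally show ?case .
qed



lemma powr_conv0:
  fixes a b u v p :: real
  assumes p: "p \<ge> 1" and "a \<ge> 0" "b \<ge> 0" "u \<ge> 0" "v \<ge> 0" "u + v = 1"
  shows "(u * a + v * b) powr p \<le> u * a powr p + v * b powr p"
proof (cases "a = 0")
  case True
  have "(v * b) powr p = v powr p * b powr p" using assms by (simp add: powr_mult)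
  also have "\<dots> \<le> v powr 1 * b powr p"
    using assms by (intro mult_right_mono powr_mono') auto
  finally show ?thesis using True assms by simp
next
  case a: False
  show ?thesis
  proof (cases "b = 0")
    case True
    have "(u * a) powr p = u powr p * a powr p" using assms by (simp add: powr_mult)
    also have "\<dots> \<le> u powr 1 * a powr p"
      using assms by (intro mult_right_mono powr_mono') auto
    finally show ?thesis using True assms by simp
  next
    case False
    have "convex_on {0<..} (\<lambda>x::real. x powr p)" by (rule powr_convex[OF p])
    then have "(\<lambda>x::real. x powr p) ((1 - v) *\<^sub>R a + v *\<^sub>R b) \<le> (1 - v) * a powr p + v * b powr p"
      using assms a False by (intro convex_onD) auto
    moreover have "u = 1 - v" using assms by simp
    ultimately show ?thesis by simp
  qed
qed

lemma convex_abs_powr: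
  fixes p :: real assumes p: "p \<ge> 1"
  shows "convex_on UNIV (\<lambda>x::real. \<bar>x\<bar> powr p)"
  unfolding convex_on_def
proof (intro conjI ballI allI impI)
  fix x y u v :: real
  assume uv: "0 \<le> u" "0 \<le> v" "u + v = 1"
  have "\<bar>u *\<^sub>R x + v *\<^sub>R y\<bar> \<le> u * \<bar>x\<bar> + v * \<bar>y\<bar>"
    using uv by (simp add: abs_triangle_ineq[THEN order_trans] abs_mult)
  then have "\<bar>u *\<^sub>R x + v *\<^sub>R y\<bar> powr p \<le> (u * \<bar>x\<bar> + v * \<bar>y\<bar>) powr p"
    using p by (intro powr_mono2) auto
  also have "\<dots> \<le> u * \<bar>x\<bar> powr p + v * \<bar>y\<bar> powr p"
    using uv p by (intro powr_conv0) auto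
  finally show "\<bar>u *\<^sub>R x + v *\<^sub>R y\<bar> powr p \<le> u * \<bar>x\<bar> powr p + v * \<bar>y\<bar> powr p" .
qed simp

lemma Eav_jensen:
  fixes p :: real assumes p: "p \<ge> 1"
  shows "\<bar>Eav n f\<bar> powr p \<le> Eav n (\<lambda>e. \<bar>f e\<bar> powr p)"
proof -
  have "(\<lambda>x::real. \<bar>x\<bar> powr p) (\<Sum>k<2^n. (1/2^n) *\<^sub>R f (sv k)) \<le> (\<Sum>k<2^n. (1/2^n) * \<bar>f (sv k)\<bar> powr p)"
    by (rule convex_on_sum[OF _ _ convex_abs_powr[OF p]]) (auto simp: lessThan_empty_iff)
  then show ?thesis
    by (simp add: Eav_def sum_divide_distrib)
qed

lemma Eav_CS: "(Eav n (\<lambda>e. f e * g e))^2 \<le> Eav n (\<lambda>e. (f e)^2) * Eav n (\<lambda>e. (g e)^2)"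
proof -
  define w :: real where "w = sqrt (2^n)"
  have w: "w > 0" "w^2 = 2^n" unfolding w_def by auto
  have "(\<Sum>k<2^n. (f (sv k) / w) * (g (sv k) / w))^2
        \<le> (\<Sum>k<2^n. (f (sv k) / w)^2) * (\<Sum>k<2^n. (g (sv k) / w)^2)"
    by (rule Cauchy_Schwarz_ineq_sum)
  moreover have "(\<Sum>k<2^n. (f (sv k) / w) * (g (sv k) / w)) = Eav n (\<lambda>e. f e * g e)"
    using w by (simp add: Eav_def sum_divide_distrib power2_eq_square)
  moreover have "(\<Sum>k<2^n. (f (sv k) / w)^2) = Eav n (\<lambda>e. (f e)^2)"
    using w by (simp add: Eav_def sum_divide_distrib power_divide)
  moreover have "(\<Sum>k<2^n. (g (sv k) / w)^2) = Eav n (\<lambda>e. (g e)^2)"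
    using w by (simp add: Eav_def sum_divide_distrib power_divide)
  ultimately show ?thesis by simp
qed

lemma Eav_nonneg: "(\<And>e. f e \<ge> 0) \<Longrightarrow> Eav n f \<ge> 0"
  unfolding Eav_def by (intro divide_nonneg_pos sum_nonneg) auto



lemma kh_a: "(Eav n (\<lambda>e. (S e)^2))^2 \<le> Eav n (\<lambda>e. \<bar>S e\<bar>) * Eav n (\<lambda>e. \<bar>S e\<bar> * (S e)^2)"
proof -
  have "(Eav n (\<lambda>e. sqrt \<bar>S e\<bar> * (sqrt \<bar>S e\<bar> * \<bar>S e\<bar>)))^2
     \<le> Eav n (\<lambda>e. (sqrt \<bar>S e\<bar>)^2) * Eav n (\<lambda>e. (sqrt \<bar>S e\<bar> * \<bar>S e\<bar>)^2)"
    by (rule Eav_CS)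
  moreover have "(\<lambda>e. sqrt \<bar>S e\<bar> * (sqrt \<bar>S e\<bar> * \<bar>S e\<bar>)) = (\<lambda>e. (S e)^2)"
    by (auto simp: power2_eq_square simp flip: mult.assoc)
  moreover have "(\<lambda>e. (sqrt \<bar>S e\<bar>)^2) = (\<lambda>e. \<bar>S e\<bar>)" by auto
  moreover have "(\<lambda>e. (sqrt \<bar>S e\<bar> * \<bar>S e\<bar>)^2) = (\<lambda>e. \<bar>S e\<bar> * (S e)^2)"
    by (auto simp: power_mult_distrib)
  ultimately show ?thesis by simp
qed

lemma kh_b: "(Eav n (\<lambda>e. \<bar>S e\<bar> * (S e)^2))^2 \<le> Eav n (\<lambda>e. (S e)^2) * Eav n (\<lambda>e. (S e)^4)"
proof -
  have "(Eav n (\<lambda>e. \<bar>S e\<bar> * (S e)^2))^2 \<le> Eav n (\<lambda>e. \<bar>S e\<bar>^2) * Eav n (\<lambda>e. ((S e)^2)^2)"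
    by (rule Eav_CS)
  moreover have "(\<lambda>e. ((S e)^2)^2) = (\<lambda>e. (S e)^4)" by (simp flip: power_mult)
  ultimately show ?thesis by simp
qed


lemma kh_c:
  fixes m1 m3 s :: real
  assumes s0: "s \<ge> 0" and m1: "m1 \<ge> 0" and m3: "m3 \<ge> 0"
    and a: "(s^2)^2 \<le> m1 * m3" and b: "m3^2 \<le> s^2 * (3 * s^4)"
  shows "s \<le> sqrt 3 * m1"
proof -
  have "s^2 * (3 * s^4) = (sqrt 3 * s^3)^2"
  proof -
    have "(sqrt 3 * s^3)^2 = 3 * s^6" by (simp add: power_mult_distrib flip: power_mult)
    moreover have "s^2 * (3 * s^4) = 3 * s^6" by (simp add: eval_nat_numeral)
    ultimately show ?thesis by simp
  qed
  with b have "m3^2 \<le> (sqrt 3 * s^3)^2" by simp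
  then have m3b: "m3 \<le> sqrt 3 * s^3" by (rule power2_le_imp_le) (simp_all add: s0)
  have "m1 * m3 \<le> m1 * (sqrt 3 * s^3)" using m3b m1 by (rule mult_left_mono)
  moreover have "(s^2)^2 = s^4" by (simp flip: power_mult)
  ultimately have s4: "s^4 \<le> m1 * (sqrt 3 * s^3)" using a by linarith
  show ?thesis
  proof (cases "s = 0")
    case True then show ?thesis using m1 by simp
  next
    case False
    then have p: "s^3 > 0" using s0 by simp
    have "s^3 * s = s^4" by (simp add: eval_nat_numeral)
    moreover have "m1 * (sqrt 3 * s^3) = s^3 * (sqrt 3 * m1)" by (simp only: ac_simps)
    ultimately have "s^3 * s \<le> s^3 * (sqrt 3 * m1)" using s4 by linarith
    then show ?thesis using p by (simp add: mult_le_cancel_left_pos)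
  qed
qed


lemma khintchine_L1:
  "sqrt (\<Sum>j<n. (b j)^2) \<le> sqrt 3 * Eav n (\<lambda>e. \<bar>\<Sum>j<n. b j * e j\<bar>)"
proof -
  define S where "S = (\<lambda>e. \<Sum>j<n. b j * e j)"
  define \<sigma> where "\<sigma> = sqrt (\<Sum>j<n. (b j)^2)"
  have s0: "\<sigma> \<ge> 0" unfolding \<sigma>_def by (simp add: sum_nonneg)
  have ss: "\<sigma>^2 = (\<Sum>j<n. (b j)^2)" unfolding \<sigma>_def by (simp add: sum_nonneg)
  have sig2: "Eav n (\<lambda>e. (S e)^2) = \<sigma>^2"
    using Eav_mom2[of n 0 b] ss unfolding S_def by simp
  have "(\<sigma>^2)^2 = \<sigma>^4" by (simp flip: power_mult)
  then have sig4: "Eav n (\<lambda>e. (S e)^4) \<le> 3 * \<sigma>^4"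
    using Eav_mom4[of n 0 b] ss unfolding S_def by simp
  have "\<sigma> \<le> sqrt 3 * Eav n (\<lambda>e. \<bar>S e\<bar>)"
  proof (rule kh_c[OF s0])
    show "0 \<le> Eav n (\<lambda>e. \<bar>S e\<bar>)" by (rule Eav_nonneg) simp
    show "0 \<le> Eav n (\<lambda>e. \<bar>S e\<bar> * (S e)^2)" by (rule Eav_nonneg) simp
    show "(\<sigma>^2)^2 \<le> Eav n (\<lambda>e. \<bar>S e\<bar>) * Eav n (\<lambda>e. \<bar>S e\<bar> * (S e)^2)"
      using kh_a[of n S] sig2 by simp
    have "Eav n (\<lambda>e. (S e)^2) * Eav n (\<lambda>e. (S e)^4) \<le> \<sigma>^2 * (3 * \<sigma>^4)"
      using sig2 sig4 by (simp add: mult_left_mono)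
    then show "(Eav n (\<lambda>e. \<bar>S e\<bar> * (S e)^2))^2 \<le> \<sigma>^2 * (3 * \<sigma>^4)"
      using kh_b[of n S] by linarith
  qed
  then show ?thesis unfolding \<sigma>_def S_def .
qed


lemma convex_pair:
  fixes F :: "real \<Rightarrow> real" and y z t :: real
  assumes F: "convex_on UNIV F" and y: "\<bar>y\<bar> \<le> 1"
  shows "F (z + t * y) + F (z - t * y) \<le> F (z + t) + F (z - t)"
proof -
  define l where "l = (1 + y) / 2"
  have l: "0 \<le> l" "l \<le> 1" using y unfolding l_def by auto
  have "F ((1 - l) *\<^sub>R (z - t) + l *\<^sub>R (z + t)) \<le> (1 - l) * F (z - t) + l * F (z + t)"
    using l by (intro convex_onD[OF F]) auto
  moreover have "(1 - l) *\<^sub>R (z - t) + l *\<^sub>R (z + t) = z + t * y"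
    unfolding l_def by (simp add: algebra_simps add_divide_distrib diff_divide_distrib)
  moreover have "F ((1 - l) *\<^sub>R (z + t) + l *\<^sub>R (z - t)) \<le> (1 - l) * F (z + t) + l * F (z - t)"
    using l by (intro convex_onD[OF F]) auto
  moreover have "(1 - l) *\<^sub>R (z + t) + l *\<^sub>R (z - t) = z - t * y"
    unfolding l_def by (simp add: algebra_simps add_divide_distrib diff_divide_distrib)
  ultimately show ?thesis by (simp add: algebra_simps)
qed

lemma contraction:
  fixes F :: "real \<Rightarrow> real"
  assumes F: "convex_on UNIV F"
  shows "(\<forall>j<n. \<bar>y j\<bar> \<le> 1) \<Longrightarrow>
    Eav n (\<lambda>e. F (c + (\<Sum>j<n. a j * y j * e j))) \<le> Eav n (\<lambda>e. F (c + (\<Sum>j<n. a j * e j)))"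
proof (induction n arbitrary: a y c)
  case 0 then show ?case by simp
next
  case (Suc n)
  have "Eav (Suc n) (\<lambda>e. F (c + (\<Sum>j<Suc n. a j * y j * e j)))
     = (Eav n (\<lambda>e. F ((c + a 0 * y 0) + (\<Sum>j<n. a (Suc j) * y (Suc j) * e j)))
        + Eav n (\<lambda>e. F ((c - a 0 * y 0) + (\<Sum>j<n. a (Suc j) * y (Suc j) * e j)))) / 2"
    unfolding Eav_Suc sum_scons by (simp add: algebra_simps)
  also have "\<dots> \<le> (Eav n (\<lambda>e. F ((c + a 0 * y 0) + (\<Sum>j<n. a (Suc j) * e j)))
        + Eav n (\<lambda>e. F ((c - a 0 * y 0) + (\<Sum>j<n. a (Suc j) * e j)))) / 2"
    using Suc.IH[where a="\<lambda>j. a (Suc j)" and y="\<lambda>j. y (Suc j)" and c="c + a 0 * y 0"]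
          Suc.IH[where a="\<lambda>j. a (Suc j)" and y="\<lambda>j. y (Suc j)" and c="c - a 0 * y 0"] Suc.prems
    by (intro divide_right_mono add_mono) auto
  also have "\<dots> \<le> (Eav n (\<lambda>e. F ((c + a 0) + (\<Sum>j<n. a (Suc j) * e j)))
        + Eav n (\<lambda>e. F ((c - a 0) + (\<Sum>j<n. a (Suc j) * e j)))) / 2"
  proof -
    have "Eav n (\<lambda>e. F ((c + a 0 * y 0) + (\<Sum>j<n. a (Suc j) * e j)) + F ((c - a 0 * y 0) + (\<Sum>j<n. a (Suc j) * e j)))
       \<le> Eav n (\<lambda>e. F ((c + a 0) + (\<Sum>j<n. a (Suc j) * e j)) + F ((c - a 0) + (\<Sum>j<n. a (Suc j) * e j)))"
    proof (rule Eav_mono)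
      fix k
      have "\<bar>y 0\<bar> \<le> 1" using Suc.prems by auto
      from convex_pair[OF F this, of "c + (\<Sum>j<n. a (Suc j) * sv k j)" "a 0"]
      show "F ((c + a 0 * y 0) + (\<Sum>j<n. a (Suc j) * sv k j)) + F ((c - a 0 * y 0) + (\<Sum>j<n. a (Suc j) * sv k j))
         \<le> F ((c + a 0) + (\<Sum>j<n. a (Suc j) * sv k j)) + F ((c - a 0) + (\<Sum>j<n. a (Suc j) * sv k j))"
        by (simp add: algebra_simps)
    qed
    then show ?thesis by (simp add: Eav_add)
  qed
  also have "\<dots> = Eav (Suc n) (\<lambda>e. F (c + (\<Sum>j<Suc n. a j * e j)))"
    unfolding Eav_Suc sum_scons by (simp add: algebra_simps)
  finally show ?case .
qed



lemma rad_double: "rademacher (Suc k) t = rademacher k (2 * t)"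
  unfolding rademacher_def by (simp add: mult_ac)

lemma sin_period_nat: "sin (x + real m * (2 * pi)) = sin x"
proof (induction m)
  case 0 then show ?case by simp
next
  case (Suc m)
  have "x + real (Suc m) * (2 * pi) = (x + real m * (2 * pi)) + 2 * pi" by (simp add: algebra_simps)
  then show ?case using Suc sin_periodic[of "x + real m * (2 * pi)"] by (simp only: add.assoc)
qed

lemma rad_period: "rademacher (Suc k) (s + 1) = rademacher (Suc k) s"
proof -
  have "2 ^ Suc k * pi * (s + 1) = 2 ^ Suc k * pi * s + real (2^k) * (2 * pi)"
    by (simp add: algebra_simps)
  then show ?thesis unfolding rademacher_def by (simp only: sin_period_nat)
qed

lemma rad1_pos: "0 < t \<Longrightarrow> t < 1/2 \<Longrightarrow> rademacher 1 t = 1"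
  unfolding rademacher_def by (simp add: sin_gt_zero)

lemma rad1_neg: "1/2 < t \<Longrightarrow> t < 1 \<Longrightarrow> rademacher 1 t = -1"
  unfolding rademacher_def by (simp add: sin_lt_zero)

lemma rad_integral:
  fixes F :: "real \<Rightarrow> real"
  shows "((\<lambda>t. F (c + (\<Sum>j<n. b j * rademacher (Suc j) t)))
          has_integral Eav n (\<lambda>e. F (c + (\<Sum>j<n. b j * e j)))) {0..1}"
proof (induction n arbitrary: b c)
  case 0
  show ?case using has_integral_const_real[of "F c" 0 1] by (simp add: Eav_0)
next
  case (Suc n)
  define hp where "hp = (\<lambda>s. F ((c + b 0) + (\<Sum>j<n. b (Suc j) * rademacher (Suc j) s)))"
  define hm where "hm = (\<lambda>s. F ((c - b 0) + (\<Sum>j<n. b (Suc j) * rademacher (Suc j) s)))"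
  define Ip where "Ip = Eav n (\<lambda>e. F ((c + b 0) + (\<Sum>j<n. b (Suc j) * e j)))"
  define Im where "Im = Eav n (\<lambda>e. F ((c - b 0) + (\<Sum>j<n. b (Suc j) * e j)))"
  have hp: "(hp has_integral Ip) {0..1}" unfolding hp_def Ip_def by (rule Suc.IH)
  have hm: "(hm has_integral Im) {0..1}" unfolding hm_def Im_def by (rule Suc.IH)
  define g where "g = (\<lambda>t. F (c + (\<Sum>j<Suc n. b j * rademacher (Suc j) t)))"
  have g_eq: "g t = F (c + b 0 * rademacher 1 t + (\<Sum>j<n. b (Suc j) * rademacher (Suc j) (2 * t)))" for t
    unfolding g_def by (subst sum.lessThan_Suc_shift) (simp add: rad_double[of "Suc _"] add.assoc)
  have "((\<lambda>x. hp (2 * x + 0)) has_integral (1 / \<bar>2\<bar>) *\<^sub>R Ip) ((\<lambda>x. x / 2 - 0 / 2) ` {0..1})"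
    by (rule has_integral_affinity01[OF hp]) simp
  moreover have "(\<lambda>x::real. x / 2 - 0 / 2) ` {0..1} = {0..1/2}"
    by (simp add: image_affinity_atLeastAtMost_div_diff)
  ultimately have i1: "((\<lambda>x. hp (2 * x)) has_integral Ip / 2) {0..1/2}" by simp
  have "((\<lambda>x. hm (2 * x + -1)) has_integral (1 / \<bar>2\<bar>) *\<^sub>R Im) ((\<lambda>x. x / 2 - -1 / 2) ` {0..1})"
    by (rule has_integral_affinity01[OF hm]) simp
  moreover have "(\<lambda>x::real. x / 2 - -1 / 2) ` {0..1} = {1/2..1}"
    using image_affinity_atLeastAtMost_div[of 2 "1/2" "0::real" 1] by simp
  ultimately have i2: "((\<lambda>x. hm (2 * x - 1)) has_integral Im / 2) {1/2..1}" by simp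
  have g1: "(g has_integral Ip / 2) {0..1/2}"
  proof (rule has_integral_spike_finite[OF _ _ i1])
    show "finite {0, 1/2::real}" by simp
    fix t assume t: "t \<in> {0..1/2} - {0, 1/2::real}"
    then have "rademacher 1 t = 1" by (intro rad1_pos) auto
    then show "g t = hp (2 * t)" unfolding g_eq hp_def by simp
  qed
  have g2: "(g has_integral Im / 2) {1/2..1}"
  proof (rule has_integral_spike_finite[OF _ _ i2])
    show "finite {1/2, 1::real}" by simp
    fix t assume t: "t \<in> {1/2..1} - {1/2, 1::real}"
    then have "rademacher 1 t = -1" by (intro rad1_neg) auto
    moreover have "rademacher (Suc j) (2 * t) = rademacher (Suc j) (2 * t - 1)" for j
      using rad_period[of j "2 * t - 1"] by simp
    ultimately show "g t = hm (2 * t - 1)" unfolding g_eq hm_def by simp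
  qed
  have "(g has_integral (Ip / 2 + Im / 2)) {0..1}"
    by (rule has_integral_combine[OF _ _ g1 g2]) auto
  moreover have "Ip / 2 + Im / 2 = Eav (Suc n) (\<lambda>e. F (c + (\<Sum>j<Suc n. b j * e j)))"
    unfolding Ip_def Im_def Eav_Suc sum_scons by (simp add: algebra_simps add_divide_distrib)
  ultimately show ?case unfolding g_def by simp
qed


lemma finsupp_Xsp: "(\<forall>i\<ge>N. x i = 0) \<Longrightarrow> x \<in> Xsp q"
proof -
  assume h: "\<forall>i\<ge>N. x i = 0"
  show ?thesis
  proof (cases "q = \<infinity>")
    case True
    have "eventually (\<lambda>i. x i = 0) sequentially" using h by (auto simp: eventually_sequentially)
    then have "x \<longlonglongrightarrow> 0" by (rule tendsto_eventually)
    then show ?thesis using True by (simp add: Xsp_def)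
  next
    case False
    have "summable (\<lambda>i. \<bar>x i\<bar> powr real_of_ereal q)"
      by (rule summable_finite[of "{..<N}"]) (use h in auto)
    then show ?thesis using False by (simp add: Xsp_def)
  qed
qed

lemma Xnorm_fin: "q \<noteq> \<infinity> \<Longrightarrow> (\<forall>i\<ge>N. x i = 0) \<Longrightarrow>
   Xnorm q x = (\<Sum>i<N. \<bar>x i\<bar> powr real_of_ereal q) powr (1 / real_of_ereal q)"
  unfolding Xnorm_def by (simp, subst suminf_finite[of "{..<N}"]) auto

lemma Xnorm_inf_le: "(\<And>i. \<bar>x i\<bar> \<le> c) \<Longrightarrow> Xnorm \<infinity> x \<le> c"
  unfolding Xnorm_def by (simp add: cSUP_least)

lemma Xinf_bdd: "x \<in> Xsp \<infinity> \<Longrightarrow> bdd_above (range (\<lambda>i. \<bar>x i\<bar>))"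
proof -
  assume "x \<in> Xsp \<infinity>"
  then have "x \<longlonglongrightarrow> 0" by (simp add: Xsp_def)
  then have "Bseq x" by (intro convergent_imp_Bseq) (auto simp: convergent_def)
  then show ?thesis using Bseq_bdd_above'[of x] by simp
qed

lemma Xinf_bound: "x \<in> Xsp \<infinity> \<Longrightarrow> \<bar>x i\<bar> \<le> Xnorm \<infinity> x"
  unfolding Xnorm_def using cSUP_upper[OF UNIV_I Xinf_bdd] by simp

lemma Xfin_partial: "q \<noteq> \<infinity> \<Longrightarrow> x \<in> Xsp q \<Longrightarrow> finite I \<Longrightarrow>
   (\<Sum>i\<in>I. \<bar>x i\<bar> powr real_of_ereal q) \<le> (\<Sum>i. \<bar>x i\<bar> powr real_of_ereal q)"
  by (rule sum_le_suminf) (auto simp: Xsp_def)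

lemma Xfin_bound:
  assumes "q \<noteq> \<infinity>" "real_of_ereal q > 0" "x \<in> Xsp q"
  shows "\<bar>x i\<bar> \<le> Xnorm q x"
proof -
  define r where "r = real_of_ereal q"
  have "\<bar>x i\<bar> powr r \<le> (\<Sum>i. \<bar>x i\<bar> powr r)"
    using Xfin_partial[OF assms(1,3), of "{i}"] unfolding r_def by simp
  then have "(\<bar>x i\<bar> powr r) powr (1/r) \<le> (\<Sum>i. \<bar>x i\<bar> powr r) powr (1/r)"
    using assms(2) unfolding r_def by (intro powr_mono2) auto
  moreover have "(\<bar>x i\<bar> powr r) powr (1/r) = \<bar>x i\<bar>"
    using assms(2) unfolding r_def by (simp add: powr_powr)
  ultimately show ?thesis using assms(1) unfolding Xnorm_def r_def by simp
qed

lemma Xfin_unit: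
  assumes "q \<noteq> \<infinity>" "real_of_ereal q > 0" "x \<in> Xsp q" "Xnorm q x \<le> 1" "finite I"
  shows "(\<Sum>i\<in>I. \<bar>x i\<bar> powr real_of_ereal q) \<le> 1"
proof -
  define r where "r = real_of_ereal q"
  define s where "s = (\<Sum>i. \<bar>x i\<bar> powr r)"
  have s0: "s \<ge> 0" unfolding s_def using assms(3,1) by (intro suminf_nonneg) (auto simp: Xsp_def r_def)
  have "s powr (1/r) \<le> 1" using assms(1,4) unfolding Xnorm_def s_def r_def by simp
  then have "s \<le> 1"
  proof -
    assume h: "s powr (1/r) \<le> 1"
    show "s \<le> 1"
    proof (rule ccontr)
      assume "\<not> s \<le> 1"
      then have "1 < s" by simp
      then have "1 < s powr (1/r)" using assms(2) unfolding r_def using powr_less_mono2[of "1/r" 1 s] by simp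
      with h show False by simp
    qed
  qed
  moreover have "(\<Sum>i\<in>I. \<bar>x i\<bar> powr r) \<le> s"
    using Xfin_partial[OF assms(1,3,5)] unfolding s_def r_def .
  ultimately show ?thesis unfolding r_def by simp
qed


lemma sgn_times_self: "sgn (x::real) * x = \<bar>x\<bar>"
  by (auto simp: sgn_if)

lemma holder_unit:
  fixes p qq :: real
  assumes p: "p > 1" and qq: "qq > 1" and pq: "1/p + 1/qq = 1" and I: "finite I"
    and x: "(\<Sum>k\<in>I. \<bar>x k\<bar> powr qq) \<le> 1"
  shows "\<bar>\<Sum>k\<in>I. x k * d k\<bar> \<le> (\<Sum>k\<in>I. \<bar>d k\<bar> powr p) powr (1/p)"
proof -
  define A where "A = (\<Sum>k\<in>I. \<bar>d k\<bar> powr p)"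
  have A0: "A \<ge> 0" unfolding A_def by (simp add: sum_nonneg)
  show ?thesis
  proof (cases "A = 0")
    case True
    then have "\<forall>k\<in>I. \<bar>d k\<bar> powr p = 0" unfolding A_def using I by (subst (asm) sum_nonneg_eq_0_iff) auto
    then have "\<forall>k\<in>I. d k = 0" by simp
    then show ?thesis by simp
  next
    case False
    with A0 have Ap: "A > 0" by simp
    define Dp where "Dp = A powr (1/p)"
    have Dp: "Dp > 0" unfolding Dp_def using Ap by simp
    have DpA: "Dp powr p = A" unfolding Dp_def using Ap p by (simp add: powr_powr)
    have young: "\<bar>x k\<bar> * (\<bar>d k\<bar> / Dp) \<le> \<bar>x k\<bar> powr qq / qq + \<bar>d k\<bar> powr p / A / p" for k
    proof -
      have "\<bar>x k\<bar> * (\<bar>d k\<bar> / Dp) \<le> \<bar>x k\<bar> powr qq / qq + (\<bar>d k\<bar> / Dp) powr p / p"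
        using Youngs_inequality[of qq p "\<bar>x k\<bar>" "\<bar>d k\<bar> / Dp"] qq p pq Dp by (simp add: add.commute)
      also have "(\<bar>d k\<bar> / Dp) powr p = \<bar>d k\<bar> powr p / A"
        using Dp DpA by (simp add: powr_divide)
      finally show ?thesis .
    qed
    have "\<bar>\<Sum>k\<in>I. x k * d k\<bar> \<le> (\<Sum>k\<in>I. \<bar>x k\<bar> * \<bar>d k\<bar>)"
      by (rule order_trans[OF sum_abs]) (simp add: abs_mult)
    also have "\<dots> = Dp * (\<Sum>k\<in>I. \<bar>x k\<bar> * (\<bar>d k\<bar> / Dp))"
      using Dp by (simp add: sum_distrib_left)
    also have "\<dots> \<le> Dp * (\<Sum>k\<in>I. \<bar>x k\<bar> powr qq / qq + \<bar>d k\<bar> powr p / A / p)"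
      using Dp young by (intro mult_left_mono sum_mono) auto
    also have "(\<Sum>k\<in>I. \<bar>x k\<bar> powr qq / qq + \<bar>d k\<bar> powr p / A / p)
        = (\<Sum>k\<in>I. \<bar>x k\<bar> powr qq) / qq + (\<Sum>k\<in>I. \<bar>d k\<bar> powr p) / A / p"
      by (simp only: sum.distrib sum_divide_distrib)
    also have "\<dots> = (\<Sum>k\<in>I. \<bar>x k\<bar> powr qq) / qq + 1 / p"
      using Ap unfolding A_def by simp
    also have "Dp * \<dots> \<le> Dp * (1 / qq + 1 / p)"
      using x qq Dp by (intro mult_left_mono) (simp_all add: divide_right_mono)
    finally show ?thesis using pq unfolding Dp_def A_def by (simp add: add.commute)
  qed
qed

lemma duality_fin:
  fixes p qq B :: real
  assumes p: "p > 1" and qq: "qq = p / (p - 1)"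
    and H: "\<And>x. (\<forall>i\<ge>N::nat. x i = 0) \<Longrightarrow> (\<Sum>i<N. \<bar>x i\<bar> powr qq) \<le> 1 \<Longrightarrow> (\<Sum>i<N. x i * c i) \<le> B"
  shows "(\<Sum>i<N. \<bar>c i\<bar> powr p) powr (1/p) \<le> B"
proof -
  define A where "A = (\<Sum>i<N. \<bar>c i\<bar> powr p)"
  have A0: "A \<ge> 0" unfolding A_def by (simp add: sum_nonneg)
  have B0: "0 \<le> B" using H[of "\<lambda>i. 0"] by simp
  show ?thesis
  proof (cases "A = 0")
    case True then show ?thesis using B0 unfolding A_def by simp
  next
    case False
    with A0 have Ap: "A > 0" by simp
    define x where "x = (\<lambda>i. if i < N then sgn (c i) * \<bar>c i\<bar> powr (p - 1) / A powr ((p - 1) / p) else 0)"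
    have pq: "(p - 1) * qq = p" using p unfolding qq by simp
    have xq: "\<bar>x i\<bar> powr qq = \<bar>c i\<bar> powr p / A" if "i < N" for i
    proof -
      have "\<bar>x i\<bar> = \<bar>c i\<bar> powr (p - 1) / A powr ((p - 1) / p)"
        using that unfolding x_def by (auto simp: abs_mult abs_sgn_eq)
      then have "\<bar>x i\<bar> powr qq = (\<bar>c i\<bar> powr (p - 1)) powr qq / (A powr ((p - 1) / p)) powr qq"
        by (simp add: powr_divide)
      also have "\<dots> = \<bar>c i\<bar> powr p / A"
        using pq Ap p by (simp add: powr_powr)
      finally show ?thesis .
    qed
    have "(\<Sum>i<N. \<bar>x i\<bar> powr qq) = (\<Sum>i<N. \<bar>c i\<bar> powr p / A)"
      by (rule sum.cong) (auto simp: xq)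
    also have "\<dots> = 1" using Ap unfolding A_def by (simp add: sum_divide_distrib[symmetric])
    finally have x1: "(\<Sum>i<N. \<bar>x i\<bar> powr qq) \<le> 1" by simp
    have xc: "x i * c i = \<bar>c i\<bar> powr p / A powr ((p - 1) / p)" if "i < N" for i
    proof -
      have "sgn (c i) * c i = \<bar>c i\<bar>" by (rule sgn_times_self)
      moreover have "\<bar>c i\<bar> powr (p - 1) * \<bar>c i\<bar> = \<bar>c i\<bar> powr p"
      proof (cases "c i = 0")
        case False
        have "\<bar>c i\<bar> powr p = \<bar>c i\<bar> powr ((p - 1) + 1)" by simp
        also have "\<dots> = \<bar>c i\<bar> powr (p - 1) * \<bar>c i\<bar> powr 1" by (rule powr_add)
        also have "\<dots> = \<bar>c i\<bar> powr (p - 1) * \<bar>c i\<bar>" using False by simp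
        finally show ?thesis ..
      qed simp
      ultimately show ?thesis using that unfolding x_def
        by (simp add: field_simps) (metis mult.assoc mult.commute)
    qed
    have "(\<Sum>i<N. x i * c i) = (\<Sum>i<N. \<bar>c i\<bar> powr p / A powr ((p - 1) / p))"
      by (rule sum.cong) (auto simp: xc)
    also have "\<dots> = A / A powr ((p - 1) / p)" unfolding A_def by (simp add: sum_divide_distrib)
    also have "\<dots> = A powr (1/p)"
    proof -
      have "A / A powr ((p - 1) / p) = A powr 1 / A powr ((p - 1) / p)" using Ap by simp
      also have "\<dots> = A powr (1 - (p - 1) / p)" using Ap by (simp add: powr_diff)
      also have "1 - (p - 1) / p = 1 / p" using p by (simp add: field_simps)
      finally show ?thesis .
    qed
    finally have "A powr (1/p) = (\<Sum>i<N. x i * c i)" ..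
    also have "\<dots> \<le> B" by (rule H) (use x1 in \<open>auto simp: x_def\<close>)
    finally show ?thesis unfolding A_def .
  qed
qed

lemma duality_inf:
  fixes B :: real
  assumes H: "\<And>x. (\<forall>i\<ge>N::nat. x i = 0) \<Longrightarrow> (\<forall>i. \<bar>x i\<bar> \<le> 1) \<Longrightarrow> (\<Sum>i<N. x i * c i) \<le> B"
  shows "(\<Sum>i<N. \<bar>c i\<bar> powr 1) powr (1/1) \<le> B"
proof -
  have "(\<Sum>i<N. (\<lambda>i. if i < N then sgn (c i) else 0) i * c i) \<le> B"
    by (rule H) (auto simp: abs_sgn_eq dest: leD)
  moreover have "(\<Sum>i<N. (\<lambda>i. if i < N then sgn (c i) else 0) i * c i) = (\<Sum>i<N. \<bar>c i\<bar> powr 1)"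
    by (rule sum.cong) (auto simp: sgn_times_self)
  ultimately show ?thesis by simp
qed


lemma mink_jensen:
  fixes u :: "nat \<Rightarrow> nat \<Rightarrow> real" and r :: real
  assumes r: "r \<ge> 1" and I: "finite I" and J: "finite J" and u0: "\<And>i j. u i j \<ge> 0"
  shows "(\<Sum>j\<in>J. (\<Sum>i\<in>I. u i j) powr r) \<le> (\<Sum>i\<in>I. (\<Sum>j\<in>J. u i j powr r) powr (1/r)) powr r"
proof -
  define m where "m = (\<lambda>i. (\<Sum>j\<in>J. u i j powr r) powr (1/r))"
  define M where "M = (\<Sum>i\<in>I. m i)"
  define I' where "I' = {i\<in>I. m i \<noteq> 0}"
  have m0: "m i \<ge> 0" for i unfolding m_def by simp
  have mr: "m i powr r = (\<Sum>j\<in>J. u i j powr r)" for i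
    unfolding m_def using r by (simp add: powr_powr sum_nonneg)
  have I'I: "I' \<subseteq> I" unfolding I'_def by auto
  have fI': "finite I'" using I I'I by (rule finite_subset[rotated])
  have zero: "u i j = 0" if "i \<in> I - I'" "j \<in> J" for i j
  proof -
    have "m i = 0" using that unfolding I'_def by auto
    then have "m i powr r = 0" by simp
    then have "(\<Sum>j\<in>J. u i j powr r) = 0" by (simp add: mr)
    then have "\<forall>j\<in>J. u i j powr r = 0" using J by (subst (asm) sum_nonneg_eq_0_iff) auto
    then show ?thesis using that by simp
  qed
  have sumI: "(\<Sum>i\<in>I. u i j) = (\<Sum>i\<in>I'. u i j)" if "j \<in> J" for j
    by (rule sum.mono_neutral_right[OF I I'I]) (use zero that in auto)
  have MI': "M = (\<Sum>i\<in>I'. m i)"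
    unfolding M_def by (rule sum.mono_neutral_right[OF I I'I]) (auto simp: I'_def)
  show ?thesis
  proof (cases "I' = {}")
    case True
    then have "(\<Sum>j\<in>J. (\<Sum>i\<in>I. u i j) powr r) = 0" using sumI by simp
    then show ?thesis by simp
  next
    case False
    have mpos: "m i > 0" if "i \<in> I'" for i using that m0[of i] unfolding I'_def by auto
    have Mpos: "M > 0" unfolding MI' using False fI' mpos by (intro sum_pos) auto
    define w where "w = (\<lambda>i. m i / M)"
    have wpos: "w i > 0" if "i \<in> I'" for i using mpos[OF that] Mpos unfolding w_def by simp
    have w1: "(\<Sum>i\<in>I'. w i) = 1" unfolding w_def using Mpos by (simp add: MI' sum_divide_distrib[symmetric])
    have jen: "(\<Sum>i\<in>I'. u i j) powr r \<le> (\<Sum>i\<in>I'. w i * (u i j / w i) powr r)" for j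
    proof -
      have "(\<lambda>x. \<bar>x\<bar> powr r) (\<Sum>i\<in>I'. w i *\<^sub>R (u i j / w i)) \<le> (\<Sum>i\<in>I'. w i * \<bar>u i j / w i\<bar> powr r)"
        by (rule convex_on_sum[OF fI' False convex_abs_powr[OF r] w1]) (use wpos in \<open>auto simp: less_imp_le\<close>)
      moreover have "(\<Sum>i\<in>I'. w i *\<^sub>R (u i j / w i)) = (\<Sum>i\<in>I'. u i j)"
        by (rule sum.cong) (use wpos in force)+
      moreover have "\<bar>\<Sum>i\<in>I'. u i j\<bar> = (\<Sum>i\<in>I'. u i j)" using u0 by (simp add: sum_nonneg)
      moreover have "(\<Sum>i\<in>I'. w i * \<bar>u i j / w i\<bar> powr r) = (\<Sum>i\<in>I'. w i * (u i j / w i) powr r)"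
      proof (rule sum.cong[OF refl])
        fix i assume "i \<in> I'"
        then have "w i > 0" by (rule wpos)
        then have "\<bar>u i j / w i\<bar> = u i j / w i" using u0[of i j] by simp
        then show "w i * \<bar>u i j / w i\<bar> powr r = w i * (u i j / w i) powr r" by simp
      qed
      ultimately show ?thesis by simp
    qed
    have "(\<Sum>j\<in>J. (\<Sum>i\<in>I. u i j) powr r) = (\<Sum>j\<in>J. (\<Sum>i\<in>I'. u i j) powr r)"
      by (rule sum.cong) (auto simp: sumI)
    also have "\<dots> \<le> (\<Sum>j\<in>J. \<Sum>i\<in>I'. w i * (u i j / w i) powr r)"
      by (rule sum_mono) (rule jen)
    also have "\<dots> = (\<Sum>i\<in>I'. w i * (\<Sum>j\<in>J. (u i j / w i) powr r))"
      by (subst sum.swap) (simp add: sum_distrib_left)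
    also have "\<dots> = (\<Sum>i\<in>I'. w i * M powr r)"
    proof (rule sum.cong[OF refl])
      fix i assume i: "i \<in> I'"
      have "(\<Sum>j\<in>J. (u i j / w i) powr r) = (\<Sum>j\<in>J. u i j powr r / w i powr r)"
        by (rule sum.cong) (use u0 wpos[OF i] in \<open>auto simp: powr_divide\<close>)
      also have "\<dots> = m i powr r / w i powr r" by (simp add: mr sum_divide_distrib)
      also have "\<dots> = (m i / w i) powr r" using m0[of i] wpos[OF i] by (simp add: powr_divide)
      also have "m i / w i = M" using mpos[OF i] Mpos unfolding w_def by simp
      finally show "w i * (\<Sum>j\<in>J. (u i j / w i) powr r) = w i * M powr r" by simp
    qed
    also have "\<dots> = M powr r" using w1 by (simp add: sum_distrib_right[symmetric])
    finally show ?thesis unfolding M_def m_def .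
  qed
qed


lemma conj_pstar: "1 \<le> p \<Longrightarrow> conj_exp (pstar p) = p"
proof -
  assume p: "1 \<le> p"
  show ?thesis
  proof (cases "p = 1")
    case True then show ?thesis by (simp add: pstar_def conj_exp_def)
  next
    case False
    then have "p - 1 > 0" using p by simp
    then have "p / (p - 1) - 1 = 1 / (p - 1)" by (simp add: field_simps)
    then show ?thesis using False \<open>p - 1 > 0\<close> by (simp add: pstar_def conj_exp_def)
  qed
qed

lemma pstar_fin: "1 < p \<Longrightarrow> pstar p \<noteq> \<infinity> \<and> real_of_ereal (pstar p) = p / (p - 1)"
  by (simp add: pstar_def)

lemma pstar_one: "pstar 1 = \<infinity>" by (simp add: pstar_def)

lemma ecan_Xsp: "ecan k \<in> Xsp q"
  by (rule finsupp_Xsp[of "Suc k"]) (simp add: ecan_def)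

lemma finsum_Xsp: "(\<lambda>i. \<Sum>k<N. c k * ecan k i) \<in> Xsp q"
  by (rule finsupp_Xsp[of N]) (simp add: ecan_def)

lemma ecan_expand: "(\<forall>i\<ge>N. x i = 0) \<Longrightarrow> x = (\<lambda>i. \<Sum>k<N. x k * ecan k i)"
proof
  fix i assume h: "\<forall>i\<ge>N. x i = 0"
  have "(\<Sum>k<N. x k * ecan k i) = (\<Sum>k<N. if i = k then x k else 0)"
    by (rule sum.cong) (auto simp: ecan_def)
  also have "\<dots> = (if i < N then x i else 0)" by (simp add: sum.delta)
  also have "\<dots> = x i" using h by (auto simp: not_less)
  finally show "x i = (\<Sum>k<N. x k * ecan k i)" ..
qed

lemma lin_left:
  assumes B: "bilinear_on (Xsp q) (Xsp r) T" and y: "y \<in> Xsp r"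
  shows "T (\<lambda>i. \<Sum>k<N. c k * ecan k i) y = (\<Sum>k<N. c k * T (ecan k) y)"
proof (induction N)
  case 0
  have "T (\<lambda>i. 0 * ecan 0 i) y = 0 * T (ecan 0) y"
    using B y ecan_Xsp unfolding bilinear_on_def by blast
  then show ?case by simp
next
  case (Suc N)
  have "T (\<lambda>i. (\<lambda>i. \<Sum>k<N. c k * ecan k i) i + (\<lambda>i. c N * ecan N i) i) y
      = T (\<lambda>i. \<Sum>k<N. c k * ecan k i) y + T (\<lambda>i. c N * ecan N i) y"
    using B y finsum_Xsp[where N=N and c=c and q=q] finsupp_Xsp[of "Suc N" "\<lambda>i. c N * ecan N i" q]
    unfolding bilinear_on_def by (auto simp: ecan_def)
  moreover have "T (\<lambda>i. c N * ecan N i) y = c N * T (ecan N) y"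
    using B y ecan_Xsp unfolding bilinear_on_def by blast
  ultimately show ?case using Suc by simp
qed

lemma lin_right:
  assumes B: "bilinear_on (Xsp q) (Xsp r) T" and x: "x \<in> Xsp q"
  shows "T x (\<lambda>i. \<Sum>k<N. c k * ecan k i) = (\<Sum>k<N. c k * T x (ecan k))"
proof (induction N)
  case 0
  have "T x (\<lambda>i. 0 * ecan 0 i) = 0 * T x (ecan 0)"
    using B x ecan_Xsp unfolding bilinear_on_def by blast
  then show ?case by simp
next
  case (Suc N)
  have "T x (\<lambda>i. (\<lambda>i. \<Sum>k<N. c k * ecan k i) i + (\<lambda>i. c N * ecan N i) i)
      = T x (\<lambda>i. \<Sum>k<N. c k * ecan k i) + T x (\<lambda>i. c N * ecan N i)"
    using B x finsum_Xsp[where N=N and c=c and q=r] finsupp_Xsp[of "Suc N" "\<lambda>i. c N * ecan N i" r]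
    unfolding bilinear_on_def by (auto simp: ecan_def)
  moreover have "T x (\<lambda>i. c N * ecan N i) = c N * T x (ecan N)"
    using B x ecan_Xsp unfolding bilinear_on_def by blast
  ultimately show ?case using Suc by simp
qed

lemma Xnorm_nonneg: "x \<in> Xsp q \<Longrightarrow> Xnorm q x \<ge> 0"
proof (cases "q = \<infinity>")
  case True
  assume "x \<in> Xsp q"
  then have "\<bar>x 0\<bar> \<le> Xnorm \<infinity> x" using True by (intro Xinf_bound) simp
  then show ?thesis using True by (meson abs_ge_zero order_trans)
next
  case False then show ?thesis by (simp add: Xnorm_def)
qed


lemma bnorm_bdd:
  assumes cb: "cont_bilinear q T"
  shows "bdd_above ((\<lambda>xy. \<bar>T (fst xy) (snd xy)\<bar>) `
     {(x, y). x \<in> Xsp q \<and> y \<in> Xsp \<infinity> \<and> Xnorm q x \<le> 1 \<and> Xnorm \<infinity> y \<le> 1})"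
proof -
  obtain C where C: "\<forall>x\<in>Xsp q. \<forall>y\<in>Xsp \<infinity>. \<bar>T x y\<bar> \<le> C * Xnorm q x * Xnorm \<infinity> y"
    using cb unfolding cont_bilinear_def by blast
  show ?thesis
  proof (rule bdd_aboveI2)
    fix xy assume "xy \<in> {(x, y). x \<in> Xsp q \<and> y \<in> Xsp \<infinity> \<and> Xnorm q x \<le> 1 \<and> Xnorm \<infinity> y \<le> 1}"
    then obtain x y where xy: "xy = (x, y)" "x \<in> Xsp q" "y \<in> Xsp \<infinity>" "Xnorm q x \<le> 1" "Xnorm \<infinity> y \<le> 1"
      by auto
    have a: "0 \<le> Xnorm q x" "0 \<le> Xnorm \<infinity> y" using xy Xnorm_nonneg by auto
    have "\<bar>T x y\<bar> \<le> C * Xnorm q x * Xnorm \<infinity> y" using C xy by auto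
    also have "\<dots> \<le> \<bar>C\<bar> * (Xnorm q x * Xnorm \<infinity> y)"
      using a by (simp add: mult.assoc mult_right_mono)
    also have "\<dots> \<le> \<bar>C\<bar> * 1"
      using a xy by (intro mult_left_mono mult_le_one) auto
    finally show "\<bar>T (fst xy) (snd xy)\<bar> \<le> \<bar>C\<bar>" using xy by simp
  qed
qed

lemma bnorm_bound:
  assumes cb: "cont_bilinear q T" and "x \<in> Xsp q" "y \<in> Xsp \<infinity>" "Xnorm q x \<le> 1" "Xnorm \<infinity> y \<le> 1"
  shows "\<bar>T x y\<bar> \<le> bnorm q T"
proof -
  have "\<bar>T (fst (x,y)) (snd (x,y))\<bar> \<le> bnorm q T"
    unfolding bnorm_def by (rule cSUP_upper[OF _ bnorm_bdd[OF cb]]) (use assms in auto)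
  then show ?thesis by simp
qed

lemma powr_half_pow: "(x::real) \<ge> 0 \<Longrightarrow> (sqrt x) powr p = x powr (p / 2)"
  by (simp add: powr_half_sqrt[symmetric] powr_powr)

lemma abs_powr_2: "\<bar>t::real\<bar> powr 2 = t^2"
  by (cases "t = 0") (auto simp: powr_realpow)

lemma upper_bound:
  assumes p1: "1 \<le> p" and p2: "p \<le> 2" and cb: "cont_bilinear (pstar p) T"
  shows "mixed_sum_trunc (pstar p) T N \<le> sqrt 3 * bnorm (pstar p) T"
proof -
  define q where "q = pstar p"
  define B where "B = bnorm q T"
  have bil: "bilinear_on (Xsp q) (Xsp \<infinity>) T" using cb unfolding cont_bilinear_def q_def by simp
  define t where "t = (\<lambda>i j. T (ecan i) (ecan j))"
  define yk where "yk = (\<lambda>k j. \<Sum>j'<N. sv k j' * ecan j' j)"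
  have yk_X: "yk k \<in> Xsp \<infinity>" for k unfolding yk_def by (rule finsum_Xsp)
  have yk_val: "yk k j = (if j < N then sv k j else 0)" for k j
  proof -
    have "yk k j = (\<Sum>j'<N. if j = j' then sv k j' else 0)"
      unfolding yk_def by (rule sum.cong) (auto simp: ecan_def)
    then show ?thesis by (simp add: sum.delta)
  qed
  have yk_n: "Xnorm \<infinity> (yk k) \<le> 1" for k
    by (rule Xnorm_inf_le) (simp add: yk_val)
  define S where "S = (\<lambda>i k. T (ecan i) (yk k))"
  have S_eq: "S i k = (\<Sum>j<N. t i j * sv k j)" for i k
  proof -
    have "S i k = (\<Sum>j<N. sv k j * t i j)" unfolding S_def yk_def t_def by (rule lin_right[OF bil ecan_Xsp])
    also have "\<dots> = (\<Sum>j<N. t i j * sv k j)" by (rule sum.cong) (simp_all add: mult.commute)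
    finally show ?thesis .
  qed
  have Tx: "T x (yk k) = (\<Sum>i<N. x i * S i k)" if "\<forall>i\<ge>N. x i = 0" for x k
  proof -
    have "T x (yk k) = T (\<lambda>i. \<Sum>i'<N. x i' * ecan i' i) (yk k)"
      by (rule arg_cong[where f="\<lambda>z. T z (yk k)", OF ecan_expand[OF that]])
    also have "\<dots> = (\<Sum>i<N. x i * S i k)"
      unfolding S_def by (rule lin_left[OF bil yk_X])
    finally show ?thesis .
  qed
  have E3: "(\<Sum>i<N. \<bar>S i k\<bar> powr p) powr (1/p) \<le> B" for k
  proof (cases "p = 1")
    case True
    have q: "q = \<infinity>" unfolding q_def True by (rule pstar_one)
    have "(\<Sum>i<N. \<bar>S i k\<bar> powr 1) powr (1/1) \<le> B"
    proof (rule duality_inf)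
      fix x :: "nat \<Rightarrow> real" assume x: "\<forall>i\<ge>N. x i = 0" "\<forall>i. \<bar>x i\<bar> \<le> 1"
      have "(\<Sum>i<N. x i * S i k) = T x (yk k)" using Tx[OF x(1)] by simp
      also have "\<dots> \<le> \<bar>T x (yk k)\<bar>" by simp
      also have "\<dots> \<le> B" unfolding B_def
        by (rule bnorm_bound[OF cb[folded q_def]]) (use x yk_X yk_n finsupp_Xsp[OF x(1)] Xnorm_inf_le q in auto)
      finally show "(\<Sum>i<N. x i * S i k) \<le> B" .
    qed
    then show ?thesis using True by simp
  next
    case False
    then have p: "p > 1" using p1 by simp
    have q: "q \<noteq> \<infinity>" "real_of_ereal q = p / (p - 1)" using pstar_fin[OF p] unfolding q_def by auto
    show ?thesis
    proof (rule duality_fin[OF p refl])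
      fix x :: "nat \<Rightarrow> real" assume x: "\<forall>i\<ge>N. x i = 0" "(\<Sum>i<N. \<bar>x i\<bar> powr (p / (p - 1))) \<le> 1"
      have xn: "Xnorm q x \<le> 1"
      proof -
        have "Xnorm q x = (\<Sum>i<N. \<bar>x i\<bar> powr (p / (p - 1))) powr (1 / (p / (p - 1)))"
          using Xnorm_fin[OF q(1) x(1)] q(2) by simp
        also have "\<dots> \<le> 1 powr (1 / (p / (p - 1)))"
          using x(2) p by (intro powr_mono2) (auto simp: sum_nonneg)
        finally show ?thesis by simp
      qed
      have "(\<Sum>i<N. x i * S i k) = T x (yk k)" using Tx[OF x(1)] by simp
      also have "\<dots> \<le> \<bar>T x (yk k)\<bar>" by simp
      also have "\<dots> \<le> B" unfolding B_def
        by (rule bnorm_bound[OF cb[folded q_def]]) (use xn yk_X yk_n finsupp_Xsp[OF x(1)] in auto)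
      finally show "(\<Sum>i<N. x i * S i k) \<le> B" .
    qed
  qed
  have B0: "B \<ge> 0" using E3[of 0] by (meson order_trans powr_ge_zero)
  have E3': "(\<Sum>i<N. \<bar>S i k\<bar> powr p) \<le> B powr p" for k
  proof -
    have "(\<Sum>i<N. \<bar>S i k\<bar> powr p) = ((\<Sum>i<N. \<bar>S i k\<bar> powr p) powr (1/p)) powr p"
      using p1 by (simp add: powr_powr sum_nonneg)
    also have "\<dots> \<le> B powr p" using E3[of k] p1 by (intro powr_mono2) auto
    finally show ?thesis .
  qed
  define M where "M = (\<Sum>i<N. (\<Sum>j<N. (t i j)^2) powr (p / 2))"
  have E4: "(\<Sum>j<N. (t i j)^2) powr (p / 2) \<le> sqrt 3 powr p * Eav N (\<lambda>e. \<bar>\<Sum>j<N. t i j * e j\<bar> powr p)" for i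
  proof -
    define m1 where "m1 = Eav N (\<lambda>e. \<bar>\<Sum>j<N. t i j * e j\<bar>)"
    have m1: "m1 \<ge> 0" unfolding m1_def by (rule Eav_nonneg) simp
    have "sqrt (\<Sum>j<N. (t i j)^2) \<le> sqrt 3 * m1" unfolding m1_def by (rule khintchine_L1)
    then have "sqrt (\<Sum>j<N. (t i j)^2) powr p \<le> (sqrt 3 * m1) powr p"
      using p1 by (intro powr_mono2) (auto simp: sum_nonneg)
    also have "\<dots> = sqrt 3 powr p * m1 powr p" using m1 by (simp add: powr_mult)
    also have "m1 powr p \<le> Eav N (\<lambda>e. \<bar>\<bar>\<Sum>j<N. t i j * e j\<bar>\<bar> powr p)"
      using Eav_jensen[OF p1, of N "\<lambda>e. \<bar>\<Sum>j<N. t i j * e j\<bar>"] m1 unfolding m1_def by simp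
    finally have "sqrt (\<Sum>j<N. (t i j)^2) powr p \<le> sqrt 3 powr p * Eav N (\<lambda>e. \<bar>\<Sum>j<N. t i j * e j\<bar> powr p)"
      by (simp add: mult_left_mono)
    moreover have "sqrt (\<Sum>j<N. (t i j)^2) powr p = (\<Sum>j<N. (t i j)^2) powr (p / 2)"
      by (rule powr_half_pow) (simp add: sum_nonneg)
    ultimately show ?thesis by simp
  qed
  have M_le: "M \<le> sqrt 3 powr p * B powr p"
  proof -
    have "M \<le> (\<Sum>i<N. sqrt 3 powr p * Eav N (\<lambda>e. \<bar>\<Sum>j<N. t i j * e j\<bar> powr p))"
      unfolding M_def by (rule sum_mono) (rule E4)
    also have "\<dots> = sqrt 3 powr p * Eav N (\<lambda>e. \<Sum>i<N. \<bar>\<Sum>j<N. t i j * e j\<bar> powr p)"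
      by (simp add: Eav_sum sum_distrib_left)
    also have "Eav N (\<lambda>e. \<Sum>i<N. \<bar>\<Sum>j<N. t i j * e j\<bar> powr p) \<le> Eav N (\<lambda>e. B powr p)"
      by (rule Eav_mono) (use E3' S_eq in simp)
    also have "Eav N (\<lambda>e. B powr p) = B powr p" by (rule Eav_const)
    finally show ?thesis by (simp add: mult_left_mono)
  qed
  have cq: "conj_exp q = p" unfolding q_def by (rule conj_pstar[OF p1])
  have r1: "2 / p \<ge> 1" using p1 p2 by simp
  have mink: "(\<Sum>j<N. (\<Sum>i<N. \<bar>t i j\<bar> powr p) powr (2 / p))
      \<le> (\<Sum>i<N. (\<Sum>j<N. (\<bar>t i j\<bar> powr p) powr (2 / p)) powr (1 / (2 / p))) powr (2 / p)"
    by (rule mink_jensen[OF r1]) auto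
  moreover have "(\<Sum>i<N. (\<Sum>j<N. (\<bar>t i j\<bar> powr p) powr (2 / p)) powr (1 / (2 / p))) = M"
  proof -
    have "(\<bar>t i j\<bar> powr p) powr (2 / p) = (t i j)^2" for i j
      using p1 by (simp add: powr_powr abs_powr_2)
    then show ?thesis unfolding M_def by simp
  qed
  ultimately have mink': "(\<Sum>j<N. (\<Sum>i<N. \<bar>t i j\<bar> powr p) powr (2 / p)) \<le> M powr (2 / p)" by simp
  have M0: "M \<ge> 0" unfolding M_def by (simp add: sum_nonneg)
  have "mixed_sum_trunc q T N = (\<Sum>j<N. (\<Sum>i<N. \<bar>t i j\<bar> powr p) powr (2 / p)) powr (1/2)"
    unfolding mixed_sum_trunc_def cq t_def ..
  also have "\<dots> \<le> (M powr (2 / p)) powr (1/2)"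
    using mink' by (intro powr_mono2) (auto simp: sum_nonneg)
  also have "\<dots> = M powr (1 / p)" using M0 by (simp add: powr_powr)
  also have "\<dots> \<le> (sqrt 3 powr p * B powr p) powr (1 / p)"
    using M_le M0 p1 by (intro powr_mono2) auto
  also have "\<dots> = sqrt 3 * B" using p1 B0 by (simp add: powr_mult powr_powr)
  finally show ?thesis unfolding q_def B_def .
qed


definition cc :: "real \<Rightarrow> nat \<Rightarrow> (nat \<Rightarrow> real) \<Rightarrow> nat \<Rightarrow> nat \<Rightarrow> real" where
  "cc p n b k j = (2^n::real) powr (-1/p) * b j * sv k j"

definition lbT :: "real \<Rightarrow> nat \<Rightarrow> (nat \<Rightarrow> real) \<Rightarrow> (nat \<Rightarrow> real) \<Rightarrow> (nat \<Rightarrow> real) \<Rightarrow> real" where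
  "lbT p n b x y = (\<Sum>k<2^n. \<Sum>j<n. x k * y j * cc p n b k j)"

lemma Xbound_gen:
  assumes p1: "1 \<le> p" and x: "x \<in> Xsp (pstar p)"
  shows "\<bar>x k\<bar> \<le> Xnorm (pstar p) x"
proof (cases "p = 1")
  case True then show ?thesis using x by (simp add: pstar_one Xinf_bound)
next
  case False
  then have p: "p > 1" using p1 by simp
  show ?thesis
    by (rule Xfin_bound) (use pstar_fin[OF p] p x in auto)
qed

lemma lbT_cont: "1 \<le> p \<Longrightarrow> cont_bilinear (pstar p) (lbT p n b)"
proof -
  assume p1: "1 \<le> p"
  have bil: "bilinear_on (Xsp (pstar p)) (Xsp \<infinity>) (lbT p n b)"
    unfolding bilinear_on_def lbT_def
    by (simp add: distrib_right distrib_left sum.distrib sum_distrib_left mult_ac)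
  define C where "C = (\<Sum>k<2^n. \<Sum>j<n. \<bar>cc p n b k j\<bar>)"
  have "\<bar>lbT p n b x y\<bar> \<le> C * Xnorm (pstar p) x * Xnorm \<infinity> y"
    if x: "x \<in> Xsp (pstar p)" and y: "y \<in> Xsp \<infinity>" for x y
  proof -
    have "\<bar>lbT p n b x y\<bar> \<le> (\<Sum>k<2^n. \<Sum>j<n. \<bar>x k * y j * cc p n b k j\<bar>)"
      unfolding lbT_def by (rule order_trans[OF sum_abs sum_mono]) (rule sum_abs)
    also have "\<dots> \<le> (\<Sum>k<2^n. \<Sum>j<n. Xnorm (pstar p) x * Xnorm \<infinity> y * \<bar>cc p n b k j\<bar>)"
    proof (intro sum_mono)
      fix k j
      have "\<bar>x k\<bar> * \<bar>y j\<bar> \<le> Xnorm (pstar p) x * Xnorm \<infinity> y"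
        using Xbound_gen[OF p1 x] Xinf_bound[OF y] using Xnorm_nonneg[OF x] by (intro mult_mono) auto
      then show "\<bar>x k * y j * cc p n b k j\<bar> \<le> Xnorm (pstar p) x * Xnorm \<infinity> y * \<bar>cc p n b k j\<bar>"
        by (simp add: abs_mult mult_right_mono)
    qed
    also have "\<dots> = C * Xnorm (pstar p) x * Xnorm \<infinity> y"
      unfolding C_def by (simp add: sum_distrib_left sum_distrib_right mult_ac)
    finally show ?thesis .
  qed
  then show ?thesis using bil unfolding cont_bilinear_def by blast
qed

lemma if01_mult: "(if P then 1 else 0) * (x::real) = (if P then x else 0)"
  by simp

lemma lbT_ecan: "lbT p n b (ecan i) (ecan j) = (if i < 2^n \<and> j < n then cc p n b i j else 0)"
proof -
  have "lbT p n b (ecan i) (ecan j) = (\<Sum>k<2^n. if k = i then (\<Sum>j'<n. if j' = j then cc p n b k j' else 0) else 0)"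
    unfolding lbT_def ecan_def
    by (rule sum.cong) (simp_all add: if01_mult sum_distrib_left[symmetric] mult.assoc cong: if_cong)
  also have "\<dots> = (if i < 2^n \<and> j < n then cc p n b i j else 0)"
    by (simp add: sum.delta')
  finally show ?thesis .
qed

lemma sum_if_less:
  assumes "M \<le> (N::nat)"
  shows "(\<Sum>i<N. if i < M then f i else 0) = (\<Sum>i<M. (f i::real))"
proof -
  have "(\<Sum>i<N. if i < M then f i else 0) = (\<Sum>i<M. if i < M then f i else 0)"
    using assms by (intro sum.mono_neutral_right) auto
  also have "\<dots> = (\<Sum>i<M. f i)" by (rule sum.cong) auto
  finally show ?thesis .
qed

lemma cc_powr: "1 \<le> p \<Longrightarrow> \<bar>cc p n b k j\<bar> powr p = (2^n::real) powr (-1) * \<bar>b j\<bar> powr p"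
proof -
  assume p1: "1 \<le> p"
  have "\<bar>cc p n b k j\<bar> = (2^n::real) powr (-1/p) * \<bar>b j\<bar>"
    unfolding cc_def by (simp add: abs_mult)
  then have "\<bar>cc p n b k j\<bar> powr p = ((2^n::real) powr (-1/p)) powr p * \<bar>b j\<bar> powr p"
    by (simp add: powr_mult)
  also have "((2^n::real) powr (-1/p)) powr p = (2^n::real) powr (-1)"
    using p1 by (simp add: powr_powr)
  finally show ?thesis .
qed

lemma lbT_mixed:
  assumes p1: "1 \<le> p"
  shows "mixed_sum_trunc (pstar p) (lbT p n b) (2^n + n) = sqrt (\<Sum>j<n. (b j)^2)"
proof -
  define N0 where "N0 = 2^n + n"
  have inner: "(\<Sum>i<N0. \<bar>lbT p n b (ecan i) (ecan j)\<bar> powr p) = (if j < n then \<bar>b j\<bar> powr p else 0)" for j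
  proof (cases "j < n")
    case True
    have "(\<Sum>i<N0. \<bar>lbT p n b (ecan i) (ecan j)\<bar> powr p) = (\<Sum>i<N0. if i < 2^n then \<bar>cc p n b i j\<bar> powr p else 0)"
      by (rule sum.cong) (auto simp: lbT_ecan True)
    also have "\<dots> = (\<Sum>i<(2::nat)^n. \<bar>cc p n b i j\<bar> powr p)"
      by (rule sum_if_less) (simp add: N0_def)
    also have "\<dots> = (\<Sum>i<(2::nat)^n. (2^n::real) powr (-1) * \<bar>b j\<bar> powr p)"
      by (simp add: cc_powr[OF p1])
    also have "\<dots> = \<bar>b j\<bar> powr p"
      by (simp add: powr_minus_divide)
    finally show ?thesis using True by simp
  next
    case False
    then show ?thesis by (simp add: lbT_ecan)
  qed
  have outer: "(if j < n then \<bar>b j\<bar> powr p else 0) powr (2 / p) = (if j < n then (b j)^2 else 0)" for j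
    using p1 by (auto simp: powr_powr abs_powr_2)
  have "mixed_sum_trunc (pstar p) (lbT p n b) N0 = (\<Sum>j<N0. if j < n then (b j)^2 else 0) powr (1/2)"
    unfolding mixed_sum_trunc_def conj_pstar[OF p1] inner outer ..
  also have "(\<Sum>j<N0. if j < n then (b j)^2 else 0) = (\<Sum>j<n. (b j)^2)"
    by (rule sum_if_less) (simp add: N0_def)
  also have "(\<Sum>j<n. (b j)^2) powr (1/2) = sqrt (\<Sum>j<n. (b j)^2)"
    by (simp add: powr_half_sqrt sum_nonneg)
  finally show ?thesis unfolding N0_def .
qed

lemma lbT_val: "lbT p n b x y = (\<Sum>k<2^n. x k * (\<Sum>j<n. y j * cc p n b k j))"
  unfolding lbT_def by (simp add: sum_distrib_left mult.assoc)

lemma d_powr: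
  assumes p1: "1 \<le> p"
  shows "(\<Sum>k<(2::nat)^n. \<bar>\<Sum>j<n. y j * cc p n b k j\<bar> powr p)
       = Eav n (\<lambda>e. \<bar>0 + (\<Sum>j<n. b j * y j * e j)\<bar> powr p)"
proof -
  have "\<bar>\<Sum>j<n. y j * cc p n b k j\<bar> powr p = (2^n::real) powr (-1) * \<bar>\<Sum>j<n. b j * y j * sv k j\<bar> powr p" for k
  proof -
    have "(\<Sum>j<n. y j * cc p n b k j) = (2^n::real) powr (-1/p) * (\<Sum>j<n. b j * y j * sv k j)"
      unfolding cc_def by (simp add: sum_distrib_left mult_ac)
    then have "\<bar>\<Sum>j<n. y j * cc p n b k j\<bar> powr p = ((2^n::real) powr (-1/p)) powr p * \<bar>\<Sum>j<n. b j * y j * sv k j\<bar> powr p"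
      by (simp add: abs_mult powr_mult)
    also have "((2^n::real) powr (-1/p)) powr p = (2^n::real) powr (-1)"
      using p1 by (simp add: powr_powr)
    finally show ?thesis .
  qed
  then have "(\<Sum>k<(2::nat)^n. \<bar>\<Sum>j<n. y j * cc p n b k j\<bar> powr p)
     = (\<Sum>k<(2::nat)^n. (2^n::real) powr (-1) * \<bar>\<Sum>j<n. b j * y j * sv k j\<bar> powr p)" by simp
  also have "\<dots> = Eav n (\<lambda>e. \<bar>0 + (\<Sum>j<n. b j * y j * e j)\<bar> powr p)"
    unfolding Eav_def by (simp add: sum_divide_distrib powr_minus_divide)
  finally show ?thesis .
qed

lemma Xnorm_zero: "Xnorm q (\<lambda>i. 0) \<le> 1"
proof (cases "q = \<infinity>")
  case True then show ?thesis by (simp add: Xnorm_inf_le)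
next
  case False then show ?thesis using Xnorm_fin[OF False, of 0 "\<lambda>i. 0"] by simp
qed

lemma lbT_bnorm:
  assumes p1: "1 \<le> p"
  shows "bnorm (pstar p) (lbT p n b) \<le> Eav n (\<lambda>e. \<bar>\<Sum>j<n. b j * e j\<bar> powr p) powr (1/p)"
  unfolding bnorm_def
proof (rule cSUP_least)
  show "{(x, y). x \<in> Xsp (pstar p) \<and> y \<in> Xsp \<infinity> \<and> Xnorm (pstar p) x \<le> 1 \<and> Xnorm \<infinity> y \<le> 1} \<noteq> {}"
    using finsupp_Xsp[of 0 "\<lambda>i. 0"] Xnorm_zero by blast
next
  fix xy assume "xy \<in> {(x, y). x \<in> Xsp (pstar p) \<and> y \<in> Xsp \<infinity> \<and> Xnorm (pstar p) x \<le> 1 \<and> Xnorm \<infinity> y \<le> 1}"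
  then obtain x y where xy: "xy = (x, y)" "x \<in> Xsp (pstar p)" "y \<in> Xsp \<infinity>" "Xnorm (pstar p) x \<le> 1" "Xnorm \<infinity> y \<le> 1"
    by auto
  define d where "d = (\<lambda>k. \<Sum>j<n. y j * cc p n b k j)"
  have y1: "\<forall>j<n. \<bar>y j\<bar> \<le> 1" using Xinf_bound[OF xy(3)] xy(5) by (meson order_trans)
  have dK: "(\<Sum>k<(2::nat)^n. \<bar>d k\<bar> powr p) \<le> Eav n (\<lambda>e. \<bar>\<Sum>j<n. b j * e j\<bar> powr p)"
  proof -
    have "(\<Sum>k<(2::nat)^n. \<bar>d k\<bar> powr p) = Eav n (\<lambda>e. \<bar>0 + (\<Sum>j<n. b j * y j * e j)\<bar> powr p)"
      unfolding d_def by (rule d_powr[OF p1])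
    also have "\<dots> \<le> Eav n (\<lambda>e. \<bar>0 + (\<Sum>j<n. b j * e j)\<bar> powr p)"
      by (rule contraction[OF convex_abs_powr[OF p1] y1])
    finally show ?thesis by simp
  qed
  have val: "lbT p n b x y = (\<Sum>k<2^n. x k * d k)" unfolding d_def by (rule lbT_val)
  have "\<bar>lbT p n b x y\<bar> \<le> (\<Sum>k<(2::nat)^n. \<bar>d k\<bar> powr p) powr (1/p)"
  proof (cases "p = 1")
    case True
    have x1: "\<bar>x k\<bar> \<le> 1" for k using Xinf_bound[of x k] xy(2,4) True by (simp add: pstar_one)
    have "\<bar>lbT p n b x y\<bar> \<le> (\<Sum>k<(2::nat)^n. \<bar>x k * d k\<bar>)" unfolding val by (rule sum_abs)
    also have "\<dots> \<le> (\<Sum>k<(2::nat)^n. \<bar>d k\<bar>)"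
      by (rule sum_mono) (simp add: abs_mult mult_left_le_one_le x1)
    finally show ?thesis using True by simp
  next
    case False
    then have p: "p > 1" using p1 by simp
    have q: "pstar p \<noteq> \<infinity>" "real_of_ereal (pstar p) = p / (p - 1)" using pstar_fin[OF p] by auto
    have xs: "(\<Sum>k<(2::nat)^n. \<bar>x k\<bar> powr (p / (p - 1))) \<le> 1"
      using Xfin_unit[OF q(1) _ xy(2) xy(4)] q p by simp
    show ?thesis unfolding val
      by (rule holder_unit[OF p _ _ _ xs]) (use p in \<open>auto simp: field_simps\<close>)
  qed
  also have "\<dots> \<le> Eav n (\<lambda>e. \<bar>\<Sum>j<n. b j * e j\<bar> powr p) powr (1/p)"
    using dK p1 by (intro powr_mono2) (auto simp: sum_nonneg)
  finally show "\<bar>lbT p n b (fst xy) (snd xy)\<bar> \<le> Eav n (\<lambda>e. \<bar>\<Sum>j<n. b j * e j\<bar> powr p) powr (1/p)"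
    using xy by simp
qed


definition Sset :: "real \<Rightarrow> real set" where
  "Sset p = {D. \<forall>T. cont_bilinear (pstar p) T \<longrightarrow> (\<forall>N. mixed_sum_trunc (pstar p) T N \<le> D * bnorm (pstar p) T)}"

lemma D_const_Sset: "D_const (pstar p) = Inf (Sset p)"
  unfolding D_const_def Sset_def ..

lemma sqrt3_Sset: "1 \<le> p \<Longrightarrow> p \<le> 2 \<Longrightarrow> sqrt 3 \<in> Sset p"
  unfolding Sset_def using upper_bound by blast

lemma bnorm_nonneg: "cont_bilinear q T \<Longrightarrow> bnorm q T \<ge> 0"
proof -
  assume cb: "cont_bilinear q T"
  have "\<bar>T (\<lambda>i. 0) (\<lambda>i. 0)\<bar> \<le> bnorm q T"
    by (rule bnorm_bound[OF cb]) (auto intro: finsupp_Xsp[of 0] Xnorm_zero)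
  then show ?thesis by (meson abs_ge_zero order_trans)
qed

lemma lower_each:
  assumes p1: "1 \<le> p" and D: "D \<in> Sset p" and s: "sqrt (\<Sum>j<n. (b j)^2) > 0"
  shows "sqrt (\<Sum>j<n. (b j)^2) \<le> D * Eav n (\<lambda>e. \<bar>\<Sum>j<n. b j * e j\<bar> powr p) powr (1/p)"
proof -
  define s where "s = sqrt (\<Sum>j<n. (b j)^2)"
  define bn where "bn = bnorm (pstar p) (lbT p n b)"
  have cb: "cont_bilinear (pstar p) (lbT p n b)" by (rule lbT_cont[OF p1])
  have "\<forall>N. mixed_sum_trunc (pstar p) (lbT p n b) N \<le> D * bn"
    using D cb unfolding Sset_def bn_def by blast
  then have "mixed_sum_trunc (pstar p) (lbT p n b) (2^n + n) \<le> D * bn" by blast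
  then have "s \<le> D * bn" using lbT_mixed[OF p1, of n b] unfolding s_def by simp
  moreover have bn0: "bn \<ge> 0" unfolding bn_def by (rule bnorm_nonneg[OF cb])
  moreover have "s > 0" using s unfolding s_def .
  ultimately have Dpos: "D > 0"
    by (smt (verit) mult_nonpos_nonneg)
  have "D * bn \<le> D * Eav n (\<lambda>e. \<bar>\<Sum>j<n. b j * e j\<bar> powr p) powr (1/p)"
    using Dpos lbT_bnorm[OF p1, of n b] unfolding bn_def by (intro mult_left_mono) auto
  with \<open>s \<le> D * bn\<close> show ?thesis unfolding s_def by linarith
qed

lemma key_pos:
  assumes p1: "1 \<le> p" and p2: "p \<le> 2" and s: "sqrt (\<Sum>j<n. (b j)^2) > 0"
  shows "sqrt (\<Sum>j<n. (b j)^2) \<le> D_const (pstar p) * Eav n (\<lambda>e. \<bar>\<Sum>j<n. b j * e j\<bar> powr p) powr (1/p)"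
proof -
  define s where "s = sqrt (\<Sum>j<n. (b j)^2)"
  define K where "K = Eav n (\<lambda>e. \<bar>\<Sum>j<n. b j * e j\<bar> powr p) powr (1/p)"
  have K0: "K \<ge> 0" unfolding K_def by simp
  have each: "s \<le> D * K" if "D \<in> Sset p" for D
    using lower_each[OF p1 that s] unfolding s_def K_def .
  have Kpos: "K > 0"
  proof (rule ccontr)
    assume "\<not> K > 0"
    then have "K = 0" using K0 by simp
    then show False using each[OF sqrt3_Sset[OF p1 p2]] s unfolding s_def by simp
  qed
  have "s / K \<le> Inf (Sset p)"
  proof (rule cInf_greatest)
    show "Sset p \<noteq> {}" using sqrt3_Sset[OF p1 p2] by blast
    fix D assume "D \<in> Sset p"
    then show "s / K \<le> D" using each Kpos by (simp add: divide_le_eq)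
  qed
  then have "s \<le> Inf (Sset p) * K" using Kpos by (simp add: divide_le_eq)
  then show ?thesis unfolding s_def K_def D_const_Sset .
qed

lemma D_nonneg:
  assumes p1: "1 \<le> p" and p2: "p \<le> 2"
  shows "D_const (pstar p) \<ge> 0"
proof -
  have "sqrt (\<Sum>j<(1::nat). ((\<lambda>_. 1::real) j)^2) > 0" by simp
  from key_pos[OF p1 p2 this]
  have "1 \<le> D_const (pstar p) * Eav 1 (\<lambda>e. \<bar>\<Sum>j<1. 1 * e j\<bar> powr p) powr (1/p)" by simp
  moreover have "Eav 1 (\<lambda>e. \<bar>\<Sum>j<1. 1 * e j\<bar> powr p) powr (1/p) \<ge> 0" by simp
  ultimately show ?thesis by (smt (verit) mult_nonpos_nonneg)
qed

lemma key:
  assumes p1: "1 \<le> p" and p2: "p \<le> 2"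
  shows "sqrt (\<Sum>j<n. (b j)^2) \<le> D_const (pstar p) * Eav n (\<lambda>e. \<bar>\<Sum>j<n. b j * e j\<bar> powr p) powr (1/p)"
proof (cases "sqrt (\<Sum>j<n. (b j)^2) > 0")
  case True then show ?thesis by (rule key_pos[OF p1 p2])
next
  case False
  then have "sqrt (\<Sum>j<n. (b j)^2) = 0" using sum_nonneg[of "{..<n}" "\<lambda>j. (b j)^2"] by simp
  then show ?thesis using D_nonneg[OF p1 p2] by simp
qed

lemma integral_eq:
  "integral {0..1} (\<lambda>t. \<bar>\<Sum>j=1..n. a j * rademacher j t\<bar> powr p)
    = Eav n (\<lambda>e. \<bar>\<Sum>j<n. a (Suc j) * e j\<bar> powr p)"
proof -
  have "((\<lambda>t. (\<lambda>x. \<bar>x\<bar> powr p) (0 + (\<Sum>j<n. a (Suc j) * rademacher (Suc j) t)))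
          has_integral Eav n (\<lambda>e. (\<lambda>x. \<bar>x\<bar> powr p) (0 + (\<Sum>j<n. a (Suc j) * e j)))) {0..1}"
    by (rule rad_integral)
  moreover have "(\<Sum>j=1..n. a j * rademacher j t) = (\<Sum>j<n. a (Suc j) * rademacher (Suc j) t)" for t
    using sum.atLeast1_atMost_eq[of "\<lambda>j. a j * rademacher j t" n] by simp
  ultimately show ?thesis by (simp add: integral_unique)
qed

theorem theorem2p4:
  fixes p :: real
  assumes "1 \<le> p" and "p \<le> 2"
  shows "(\<forall>(n::nat) (a::nat \<Rightarrow> real).
            (\<Sum>j=1..n. \<bar>a j\<bar>^2) powr (1/2)
              \<le> D_const (pstar p) *
                 (integral {0..1} (\<lambda>t. \<bar>\<Sum>j=1..n. a j * rademacher j t\<bar> powr p)) powr (1/p))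
         \<and> khintchine_A p \<le> D_const (pstar p)"
proof -
  have P1: "\<forall>(n::nat) (a::nat \<Rightarrow> real).
            (\<Sum>j=1..n. \<bar>a j\<bar>^2) powr (1/2)
              \<le> D_const (pstar p) *
                 (integral {0..1} (\<lambda>t. \<bar>\<Sum>j=1..n. a j * rademacher j t\<bar> powr p)) powr (1/p)"
  proof (intro allI)
    fix n :: nat and a :: "nat \<Rightarrow> real"
    have "(\<Sum>j=1..n. \<bar>a j\<bar>^2) = (\<Sum>j<n. (a (Suc j))^2)"
      using sum.atLeast1_atMost_eq[of "\<lambda>j. \<bar>a j\<bar>^2" n] by simp
    then have "(\<Sum>j=1..n. \<bar>a j\<bar>^2) powr (1/2) = sqrt (\<Sum>j<n. (a (Suc j))^2)"
      by (simp add: powr_half_sqrt sum_nonneg)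
    then show "(\<Sum>j=1..n. \<bar>a j\<bar>^2) powr (1/2)
              \<le> D_const (pstar p) *
                 (integral {0..1} (\<lambda>t. \<bar>\<Sum>j=1..n. a j * rademacher j t\<bar> powr p)) powr (1/p)"
      using key[OF assms, where n=n and b="\<lambda>j. a (Suc j)"] integral_eq[where n=n and a=a and p=p] by simp
  qed
  have "khintchine_A p \<le> D_const (pstar p)"
    unfolding khintchine_A_def
  proof (rule cInf_lower)
    show "D_const (pstar p) \<in> {A. \<forall>(n::nat) (a::nat \<Rightarrow> real).
      (\<Sum>j=1..n. \<bar>a j\<bar>^2) powr (1/2)
        \<le> A * (integral {0..1} (\<lambda>t. \<bar>\<Sum>j=1..n. a j * rademacher j t\<bar> powr p)) powr (1/p)}"
      using P1 by blast
    show "bdd_below {A. \<forall>(n::nat) (a::nat \<Rightarrow> real).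
      (\<Sum>j=1..n. \<bar>a j\<bar>^2) powr (1/2)
        \<le> A * (integral {0..1} (\<lambda>t. \<bar>\<Sum>j=1..n. a j * rademacher j t\<bar> powr p)) powr (1/p)}"
    proof (rule bdd_belowI)
      fix A assume "A \<in> {A. \<forall>(n::nat) (a::nat \<Rightarrow> real).
        (\<Sum>j=1..n. \<bar>a j\<bar>^2) powr (1/2)
          \<le> A * (integral {0..1} (\<lambda>t. \<bar>\<Sum>j=1..n. a j * rademacher j t\<bar> powr p)) powr (1/p)}"
      note hh = this[THEN CollectD, THEN spec[of _ "1::nat"], THEN spec[of _ "\<lambda>_. 1::real"]]
      have "1 \<le> A * (integral {0..1} (\<lambda>t. \<bar>rademacher 1 t\<bar> powr p)) powr (1/p)"
        using hh by simp
      moreover have "(integral {0..1} (\<lambda>t. \<bar>rademacher 1 t\<bar> powr p)) powr (1/p) \<ge> 0"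
        by simp
      ultimately show "0 \<le> A" by (smt (verit) mult_nonpos_nonneg)
    qed
  qed
  with P1 show ?thesis by blast
qed


end
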